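(* Let $\mathcal{H}$ be a complex Hilbert space and $B,C\in\mathcal{B}(\mathcal{H})$. Then $$w^2\left(\begin{bmatrix}0 & B\\ C & 0\end{bmatrix}\right)\ge \frac18\Big[\max\{\|B+C^*\|^2,\|B-C^*\|^2\}+\|B+C^*\|\,\|B-C^*\|\Big]\ge \frac14\max\left\{\big\||B|^2+|C^*|^2\big\|,\ \big\||B^*|^2+|C|^2\big\|\right\}.$$
   Context: $\mathcal{B}(\mathcal{H})$ is the algebra of bounded linear operators on $\mathcal{H}$ with operator norm $\|\cdot\|$. For $A\in\mathcal{B}(\mathcal{H})$, $A^*$ is the adjoint, $|A|=(A^*A)^{1/2}$, $|A^*|=(AA^* )^{1/2}$, and $w(A)=\sup_{\|x\|=1}|\langle Ax,x\rangle|$ is the numerical radius. The operator matrix $\begin{bmatrix}A&B\\C&D\end{bmatrix}$ acts on $\mathcal{H}\oplus\mathcal{H}$ by $(x_1,x_2)\mapsto(Ax_1+Bx_2,\,Cx_1+Dx_2)$; $0$ denotes the zero operator. *)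

theory Defs
  imports "HOL-Analysis.Analysis"
begin

class complex_vector = real_vector +
  fixes scaleC :: "complex \<Rightarrow> 'a \<Rightarrow> 'a" (infixr \<open>*\<^sub>C\<close> 75)
  assumes scaleC_add_right: "a *\<^sub>C (x + y) = a *\<^sub>C x + a *\<^sub>C y"
    and scaleC_add_left: "(a + b) *\<^sub>C x = a *\<^sub>C x + b *\<^sub>C x"
    and scaleC_scaleC: "a *\<^sub>C (b *\<^sub>C x) = (a * b) *\<^sub>C x"
    and scaleC_one: "1 *\<^sub>C x = x"
    and scaleR_scaleC: "scaleR r x = complex_of_real r *\<^sub>C x"

text \<open>Inner product: conjugate-linear in the first argument, linear in the second.\<close>
class complex_inner = complex_vector + real_normed_vector +
  fixes cinner :: "'a \<Rightarrow> 'a \<Rightarrow> complex"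
  assumes cinner_commute: "cinner x y = cnj (cinner y x)"
    and cinner_add_left: "cinner (x + y) z = cinner x z + cinner y z"
    and cinner_scaleC_left: "cinner (r *\<^sub>C x) y = cnj r * cinner x y"
    and cinner_ge_zero: "0 \<le> Re (cinner x x)"
    and cinner_eq_zero_iff: "cinner x x = 0 \<longleftrightarrow> x = 0"
    and norm_eq_sqrt_cinner: "norm x = sqrt (Re (cinner x x))"

class chilbert_space = complex_inner + complete_space

instantiation prod :: (complex_vector, complex_vector) complex_vector
begin
definition scaleC_prod_def: "a *\<^sub>C x = (a *\<^sub>C fst x, a *\<^sub>C snd x)"
instance
  by standard (auto simp: scaleC_prod_def scaleC_add_right scaleC_add_left scaleC_scaleC
      scaleC_one scaleR_prod_def scaleR_scaleC)
end

instantiation prod :: (complex_inner, complex_inner) complex_inner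
begin
definition cinner_prod_def: "cinner x y = cinner (fst x) (fst y) + cinner (snd x) (snd y)"
instance
proof
  fix x y z :: "'a \<times> 'b" and r :: complex
  show "cinner x y = cnj (cinner y x)"
    by (simp add: cinner_prod_def cinner_commute[of "fst x"] cinner_commute[of "snd x"])
  show "cinner (x + y) z = cinner x z + cinner y z"
    by (simp add: cinner_prod_def cinner_add_left)
  show "cinner (r *\<^sub>C x) y = cnj r * cinner x y"
    by (simp add: cinner_prod_def scaleC_prod_def cinner_scaleC_left distrib_left)
  show "0 \<le> Re (cinner x x)"
    by (simp add: cinner_prod_def cinner_ge_zero add_nonneg_nonneg)
  have n1: "Re (cinner (fst x) (fst x)) = (norm (fst x))\<^sup>2"
    by (simp add: norm_eq_sqrt_cinner cinner_ge_zero)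
  have n2: "Re (cinner (snd x) (snd x)) = (norm (snd x))\<^sup>2"
    by (simp add: norm_eq_sqrt_cinner cinner_ge_zero)
  have i1: "Im (cinner (fst x) (fst x)) = 0"
    using cinner_commute[of "fst x" "fst x"] by (metis cnj.simps(2) neg_equal_zero)
  have i2: "Im (cinner (snd x) (snd x)) = 0"
    using cinner_commute[of "snd x" "snd x"] by (metis cnj.simps(2) neg_equal_zero)
  show "cinner x x = 0 \<longleftrightarrow> x = 0"
  proof
    assume "cinner x x = 0"
    then have "Re (cinner x x) = 0" by simp
    then have "(norm (fst x))\<^sup>2 + (norm (snd x))\<^sup>2 = 0"
      by (simp add: cinner_prod_def n1 n2)
    then have "fst x = 0" "snd x = 0"
      by (simp_all add: add_nonneg_eq_0_iff)
    then show "x = 0" by (simp add: prod_eq_iff)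
  next
    assume "x = 0"
    moreover have "cinner (0::'a) 0 = 0" by (simp add: cinner_eq_zero_iff)
    moreover have "cinner (0::'b) 0 = 0" by (simp add: cinner_eq_zero_iff)
    ultimately show "cinner x x = 0"
      by (simp add: cinner_prod_def)
  qed
  show "norm x = sqrt (Re (cinner x x))"
    by (simp add: norm_prod_def cinner_prod_def n1 n2)
qed
end

definition clinear :: "('a::complex_vector \<Rightarrow> 'b::complex_vector) \<Rightarrow> bool" where
  "clinear f \<longleftrightarrow> (\<forall>x y. f (x + y) = f x + f y) \<and> (\<forall>c x. f (c *\<^sub>C x) = c *\<^sub>C f x)"

definition bounded_clinear :: "('a::complex_inner \<Rightarrow> 'b::complex_inner) \<Rightarrow> bool" where
  "bounded_clinear f \<longleftrightarrow> clinear f \<and> (\<exists>K. \<forall>x. norm (f x) \<le> norm x * K)"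

definition adj :: "('a::complex_inner \<Rightarrow> 'a) \<Rightarrow> ('a \<Rightarrow> 'a)" where
  "adj A = (THE B. \<forall>x y. cinner (A x) y = cinner x (B y))"

definition numrad :: "('a::complex_inner \<Rightarrow> 'a) \<Rightarrow> real" where
  "numrad T = (SUP x\<in>{x. norm x = 1}. cmod (cinner (T x) x))"

definition block_op :: "('a::complex_inner \<Rightarrow> 'a) \<Rightarrow> ('a \<Rightarrow> 'a) \<Rightarrow> ('a \<Rightarrow> 'a) \<Rightarrow> ('a \<Rightarrow> 'a)
    \<Rightarrow> ('a \<times> 'a \<Rightarrow> 'a \<times> 'a)" where
  "block_op A B C D = (\<lambda>(x1, x2). (A x1 + B x2, C x1 + D x2))"

end

theory Submission
  imports Defs
begin



lemma cinner_conj: "cnj (cinner y x) = cinner x (y::'a::complex_inner)"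
  using cinner_commute[of x y] by simp
lemma cinner_zero_left[simp]: "cinner 0 (y::'a::complex_inner) = 0"
  using cinner_add_left[of "0::'a" 0 y] by simp
lemma cinner_add_right: "cinner (x::'a::complex_inner) (y + z) = cinner x y + cinner x z"
proof -
  have "cnj (cinner (y + z) x) = cnj (cinner y x) + cnj (cinner z x)" by (simp add: cinner_add_left)
  then show ?thesis by (simp only: cinner_conj)
qed
lemma cinner_zero_right[simp]: "cinner (x::'a::complex_inner) 0 = 0"
proof -
  have "cnj (cinner 0 x) = 0" by simp
  then show ?thesis by (simp only: cinner_conj)
qed
lemma cinner_minus_left: "cinner (- x) (y::'a::complex_inner) = - cinner x y"
proof -
  have "cinner x y + cinner (-x) y = 0" using cinner_add_left[of x "-x" y] by simp
  then show ?thesis by (rule minus_unique[symmetric])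
qed
lemma cinner_diff_left: "cinner (x - y) (z::'a::complex_inner) = cinner x z - cinner y z"
  by (simp only: cinner_add_left cinner_minus_left diff_conv_add_uminus)
lemma cinner_diff_right: "cinner (x::'a::complex_inner) (y - z) = cinner x y - cinner x z"
proof -
  have "cnj (cinner (y - z) x) = cnj (cinner y x) - cnj (cinner z x)" by (simp add: cinner_diff_left)
  then show ?thesis by (simp only: cinner_conj)
qed
lemma cinner_scaleC_right: "cinner (x::'a::complex_inner) (r *\<^sub>C y) = r * cinner x y"
proof -
  have "cnj (cinner (r *\<^sub>C y) x) = r * cnj (cinner y x)" by (simp add: cinner_scaleC_left)
  then show ?thesis by (simp only: cinner_conj)
qed
lemma cinner_scaleR_left: "cinner (scaleR r x) (y::'a::complex_inner) = of_real r * cinner x y"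
  by (simp add: scaleR_scaleC cinner_scaleC_left)
lemma cinner_scaleR_right: "cinner (x::'a::complex_inner) (scaleR r y) = of_real r * cinner x y"
  by (simp add: scaleR_scaleC cinner_scaleC_right)
lemma cinner_self_Im: "Im (cinner x (x::'a::complex_inner)) = 0"
  using arg_cong[OF cinner_commute[of x x], of Im] by simp
lemma norm_sq_cinner: "(norm x)\<^sup>2 = Re (cinner x (x::'a::complex_inner))"
  by (simp add: norm_eq_sqrt_cinner cinner_ge_zero)
lemma cinner_self: "cinner x (x::'a::complex_inner) = of_real ((norm x)\<^sup>2)"
  by (simp add: norm_sq_cinner complex_eq_iff cinner_self_Im)
lemma Re_cinner_commute: "Re (cinner x (y::'a::complex_inner)) = Re (cinner y x)"
  using arg_cong[OF cinner_commute[of x y], of Re] by simp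
lemma norm_add_sq: "(norm (x + y))\<^sup>2 = (norm x)\<^sup>2 + (norm y)\<^sup>2 + 2 * Re (cinner x (y::'a::complex_inner))"
  unfolding norm_sq_cinner by (simp add: cinner_add_left cinner_add_right Re_cinner_commute[of y x])
lemma norm_diff_sq: "(norm (x - y))\<^sup>2 = (norm x)\<^sup>2 + (norm y)\<^sup>2 - 2 * Re (cinner x (y::'a::complex_inner))"
  unfolding norm_sq_cinner by (simp add: cinner_diff_left cinner_diff_right Re_cinner_commute[of y x])

lemma Re_cinner_le: "Re (cinner x (y::'a::complex_inner)) \<le> norm x * norm y"
proof -
  have "0 \<le> (norm (scaleR (norm y) x - scaleR (norm x) y))\<^sup>2" by simp
  also have "\<dots> = 2 * (norm x)\<^sup>2 * (norm y)\<^sup>2 - 2 * (norm x * norm y) * Re (cinner x y)"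
    unfolding norm_diff_sq by (simp add: cinner_scaleR_left cinner_scaleR_right power2_eq_square algebra_simps)
  finally have h: "(norm x * norm y) * Re (cinner x y) \<le> (norm x * norm y) * (norm x * norm y)"
    by (simp add: power2_eq_square algebra_simps)
  show ?thesis
  proof (cases "norm x * norm y = 0")
    case True
    then have "x = 0 \<or> y = 0" by simp
    then show ?thesis by auto
  next
    case False
    then have "norm x * norm y > 0" by (simp add: less_le)
    with h show ?thesis by (simp add: mult_le_cancel_left)
  qed
qed

lemma norm_scaleC: "norm (c *\<^sub>C (x::'a::complex_inner)) = cmod c * norm x"
proof -
  have "(norm (c *\<^sub>C x))\<^sup>2 = (cmod c * norm x)\<^sup>2"
    unfolding norm_sq_cinner cinner_scaleC_left cinner_scaleC_right
    by (simp add: cinner_self power_mult_distrib complex_mult_cnj mult.assoc[symmetric] cmod_power2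
        flip: of_real_mult)
  then show ?thesis by (simp add: power2_eq_iff_nonneg)
qed

lemma cinner_cs: "cmod (cinner x (y::'a::complex_inner)) \<le> norm x * norm y"
proof (cases "cinner x y = 0")
  case True then show ?thesis by simp
next
  case False
  let ?w = "cinner x y"
  have "(cmod ?w)\<^sup>2 = Re (cinner x (cnj ?w *\<^sub>C y))"
    proof -
    have "cnj ?w * ?w = of_real ((cmod ?w)\<^sup>2)" using complex_norm_square[of ?w] by (simp add: mult.commute)
    then show ?thesis by (simp add: cinner_scaleC_right)
  qed
  also have "\<dots> \<le> norm x * (cmod ?w * norm y)"
    using Re_cinner_le[of x "cnj ?w *\<^sub>C y"] by (simp add: norm_scaleC)
  finally have "cmod ?w * cmod ?w \<le> cmod ?w * (norm x * norm y)" by (simp add: power2_eq_square algebra_simps)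
  with False show ?thesis by simp
qed

lemma cinner_ext: "(\<And>x. cinner x u = cinner x (v::'a::complex_inner)) \<Longrightarrow> u = v"
proof -
  assume h: "\<And>x. cinner x u = cinner x v"
  have "cinner (u - v) (u - v) = 0" by (simp add: cinner_diff_right h)
  then have "u - v = 0" by (simp only: cinner_eq_zero_iff)
  then show "u = v" by simp
qed

lemma clin_bl:
  fixes f :: "'a::complex_inner \<Rightarrow> 'b::real_normed_vector"
  assumes add: "\<And>x y. f (x+y) = f x + f y" and sc: "\<And>r x. f (of_real r *\<^sub>C x) = scaleR r (f x)"
    and bnd: "\<And>x. norm (f x) \<le> norm x * K"
  shows "bounded_linear f"
  by (rule bounded_linear_intro[OF add _ bnd]) (simp add: scaleR_scaleC sc)

lemma riesz:
  fixes f :: "'a::chilbert_space \<Rightarrow> complex"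
  assumes add: "\<And>x y. f (x+y) = f x + f y" and sc: "\<And>c x. f (c *\<^sub>C x) = c * f x"
    and bnd: "\<And>x. cmod (f x) \<le> norm x * K"
  shows "\<exists>z. \<forall>x. f x = cinner z x"
proof -
  have bl: "bounded_linear f"
    by (rule clin_bl[OF add _ bnd]) (simp add: sc scaleR_conv_of_real)
  interpret f: bounded_linear f by (fact bl)
  show ?thesis
  proof (cases "\<forall>x. f x = 0")
    case True then show ?thesis by (intro exI[of _ 0]) simp
  next
    case False
    then obtain x1 where x1: "f x1 \<noteq> 0" by auto
    have x0: "f (inverse (f x1) *\<^sub>C x1) = 1" using x1 by (simp add: sc)
    define N where "N = (\<lambda>x. (norm x)\<^sup>2) ` {x. f x = 1}"
    define d where "d = Inf N"
    have Nne: "N \<noteq> {}" using x0 unfolding N_def by auto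
    have Nbdd: "bdd_below N" unfolding N_def by (rule bdd_belowI[of _ 0]) auto
    have lower: "d \<le> (norm x)\<^sup>2" if "f x = 1" for x
      unfolding d_def by (rule cInf_lower[OF _ Nbdd]) (use that in \<open>auto simp: N_def\<close>)
    have "\<forall>n. \<exists>x. f x = 1 \<and> (norm x)\<^sup>2 < d + inverse (real (Suc n))"
    proof
      fix n
      have "Inf N < d + inverse (real (Suc n))" unfolding d_def by simp
      from cInf_lessD[OF Nne this] show "\<exists>x. f x = 1 \<and> (norm x)\<^sup>2 < d + inverse (real (Suc n))"
        unfolding N_def by auto
    qed
    from choice[OF this] obtain X where X: "\<forall>n. f (X n) = 1 \<and> (norm (X n))\<^sup>2 < d + inverse (real (Suc n))"
      by blast
    have X1: "\<And>n. f (X n) = 1" and X2: "\<And>n. (norm (X n))\<^sup>2 < d + inverse (real (Suc n))"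
      using X by auto
    have mid: "(norm (X m - X n))\<^sup>2 \<le> 2 * inverse (real (Suc m)) + 2 * inverse (real (Suc n))" for m n
    proof -
      have "f (scaleR (1/2) (X m + X n)) = 1" by (simp add: f.scaleR f.add X1 scaleR_conv_of_real)
      then have "d \<le> (norm (scaleR (1/2) (X m + X n)))\<^sup>2" by (rule lower)
      also have "\<dots> = (norm (X m + X n))\<^sup>2 / 4" by (simp add: power2_eq_square)
      finally have a: "4 * d \<le> (norm (X m + X n))\<^sup>2" by simp
      have b: "(norm (X m - X n))\<^sup>2 + (norm (X m + X n))\<^sup>2 = 2 * (norm (X m))\<^sup>2 + 2 * (norm (X n))\<^sup>2"
        unfolding norm_add_sq norm_diff_sq by simp
      show ?thesis using a b X2[of m] X2[of n] by linarith
    qed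
    have "Cauchy X"
    proof (rule CauchyI)
      fix e :: real assume e: "0 < e"
      obtain M where M: "inverse (real (Suc M)) < e\<^sup>2 / 4" using reals_Archimedean[of "e\<^sup>2/4"] e by auto
      show "\<exists>M. \<forall>m\<ge>M. \<forall>n\<ge>M. norm (X m - X n) < e"
      proof (intro exI allI impI)
        fix m n assume "M \<le> m" "M \<le> n"
        then have "inverse (real (Suc m)) \<le> inverse (real (Suc M))" "inverse (real (Suc n)) \<le> inverse (real (Suc M))"
          by (simp_all add: le_imp_inverse_le)
        then have "(norm (X m - X n))\<^sup>2 < e\<^sup>2" using mid[of m n] M by linarith
        then show "norm (X m - X n) < e" using e by (simp add: power_less_imp_less_base)
      qed
    qed
    then obtain z where lim: "X \<longlonglongrightarrow> z" using Cauchy_convergent_iff convergent_def by blast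
    have "(\<lambda>n. f (X n)) \<longlonglongrightarrow> f z" by (rule f.tendsto[OF lim])
    moreover have "(\<lambda>n. f (X n)) \<longlonglongrightarrow> 1" using X1 by simp
    ultimately have fz: "f z = 1" using LIMSEQ_unique by blast
    have "(norm z)\<^sup>2 \<le> d"
    proof (rule LIMSEQ_le)
      show "(\<lambda>n. (norm (X n))\<^sup>2) \<longlonglongrightarrow> (norm z)\<^sup>2" by (intro tendsto_intros lim)
      show "(\<lambda>n. d + inverse (real (Suc n))) \<longlonglongrightarrow> d"
        using tendsto_add[OF tendsto_const LIMSEQ_inverse_real_of_nat, of d] by simp
      show "\<exists>N. \<forall>n\<ge>N. (norm (X n))\<^sup>2 \<le> d + inverse (real (Suc n))" using X2 less_imp_le by blast
    qed
    then have minz: "(norm z)\<^sup>2 \<le> (norm x)\<^sup>2" if "f x = 1" for x using lower[OF that] by linarith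
    have orth: "cinner z w = 0" if w: "f w = 0" for w
    proof -
      define c where "c = cinner z w"
      define s where "s = 1 / ((norm w)\<^sup>2 + 1)"
      have wpos: "0 < (norm w)\<^sup>2 + 1" by (simp add: add_nonneg_pos)
      have s0: "0 < s" using wpos by (simp add: s_def)
      have s1: "s * (norm w)\<^sup>2 < 1" unfolding s_def using wpos by simp
      define t where "t = - (of_real s * cnj c)"
      have "f (z + t *\<^sub>C w) = 1" by (simp add: add sc w fz)
      then have "(norm z)\<^sup>2 \<le> (norm (z + t *\<^sub>C w))\<^sup>2" by (rule minz)
      also have "\<dots> = (norm z)\<^sup>2 + (cmod t)\<^sup>2 * (norm w)\<^sup>2 + 2 * Re (t * c)"
        unfolding norm_add_sq by (simp add: norm_scaleC power_mult_distrib cinner_scaleC_right c_def)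
      also have "(cmod t)\<^sup>2 = s\<^sup>2 * (cmod c)\<^sup>2" unfolding t_def using s0
        by (simp add: norm_mult power_mult_distrib)
      also have "Re (t * c) = - s * (cmod c)\<^sup>2" unfolding t_def cmod_power2
        by (simp add: power2_eq_square algebra_simps)
      finally have "0 \<le> s * (cmod c)\<^sup>2 * (s * (norm w)\<^sup>2 - 2)"
        by (simp add: power2_eq_square algebra_simps)
      moreover have "s * (norm w)\<^sup>2 - 2 < 0" using s1 by simp
      moreover have "0 \<le> s * (cmod c)\<^sup>2" using s0 by simp
      ultimately have "s * (cmod c)\<^sup>2 * (s * (norm w)\<^sup>2 - 2) = 0"
        using mult_nonneg_nonpos[of "s * (cmod c)\<^sup>2" "s * (norm w)\<^sup>2 - 2"] by linarith
      then have "s * (cmod c)\<^sup>2 = 0" using \<open>s * (norm w)\<^sup>2 - 2 < 0\<close> by simp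
      then show ?thesis unfolding c_def using s0 by simp
    qed
    have z0: "z \<noteq> 0" using fz by auto
    have key: "cinner z x = f x * of_real ((norm z)\<^sup>2)" for x
    proof -
      have "f (x - f x *\<^sub>C z) = 0" by (simp add: f.diff sc fz)
      then have "cinner z (x - f x *\<^sub>C z) = 0" by (rule orth)
      then show ?thesis by (simp add: cinner_diff_right cinner_scaleC_right cinner_self)
    qed
    show ?thesis
    proof (intro exI allI)
      fix x
      show "f x = cinner (scaleR (inverse ((norm z)\<^sup>2)) z) x"
        using z0 by (simp add: cinner_scaleR_left key of_real_inverse)
    qed
  qed
qed



lemma bclin_add: "bounded_clinear A \<Longrightarrow> A (x + y) = A x + A y"
  by (simp add: bounded_clinear_def clinear_def)
lemma bclin_scaleC: "bounded_clinear A \<Longrightarrow> A (c *\<^sub>C x) = c *\<^sub>C A x"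
  by (simp add: bounded_clinear_def clinear_def)
lemma bclin_bl: "bounded_clinear (A::'a::complex_inner \<Rightarrow> 'b::complex_inner) \<Longrightarrow> bounded_linear A"
proof -
  assume h: "bounded_clinear A"
  then obtain K where K: "\<And>x. norm (A x) \<le> norm x * K" unfolding bounded_clinear_def by blast
  show ?thesis by (rule clin_bl[OF _ _ K]) (use h in \<open>simp_all add: bclin_add bclin_scaleC scaleR_scaleC\<close>)
qed

lemma adj_exists:
  fixes A :: "'a::chilbert_space \<Rightarrow> 'a"
  assumes A: "bounded_clinear A"
  shows "\<exists>G. \<forall>x y. cinner (A x) y = cinner x (G y)"
proof -
  obtain K where K: "\<And>x. norm (A x) \<le> norm x * K" using A unfolding bounded_clinear_def by blast
  have "\<exists>z. \<forall>x. cinner (A x) y = cinner x z" for y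
  proof -
    have "\<exists>z. \<forall>x. cinner y (A x) = cinner z x"
    proof (rule riesz)
      show "cinner y (A (x + x')) = cinner y (A x) + cinner y (A x')" for x x'
        by (simp add: bclin_add[OF A] cinner_add_right)
      show "cinner y (A (c *\<^sub>C x)) = c * cinner y (A x)" for c x
        by (simp add: bclin_scaleC[OF A] cinner_scaleC_right)
      show "cmod (cinner y (A x)) \<le> norm x * (norm y * K)" for x
        using cinner_cs[of y "A x"] mult_left_mono[OF K[of x] norm_ge_zero[of y]]
        by (simp add: algebra_simps)
    qed
    then obtain z where z: "\<And>x. cinner y (A x) = cinner z x" by blast
    show ?thesis
    proof (intro exI allI)
      fix x show "cinner (A x) y = cinner x z" using arg_cong[OF z[of x], of cnj] by (simp add: cinner_conj)
    qed
  qed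
  then have "\<forall>y. \<exists>z. \<forall>x. cinner (A x) y = cinner x z" by blast
  from choice[OF this] show ?thesis by blast
qed

lemma adj_char:
  fixes A :: "'a::chilbert_space \<Rightarrow> 'a"
  assumes A: "bounded_clinear A"
  shows "cinner (A x) y = cinner x (adj A y)"
proof -
  obtain G where G: "\<forall>x y. cinner (A x) y = cinner x (G y)" using adj_exists[OF A] by blast
  have "adj A = G" unfolding adj_def
  proof (rule the_equality)
    show "\<forall>x y. cinner (A x) y = cinner x (G y)" by (fact G)
    fix H assume H: "\<forall>x y. cinner (A x) y = cinner x (H y)"
    show "H = G"
    proof
      fix y show "H y = G y" by (rule cinner_ext) (simp add: G H[rule_format, symmetric])
    qed
  qed
  then show ?thesis using G by simp
qed

lemma adj_char2:
  fixes A :: "'a::chilbert_space \<Rightarrow> 'a"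
  assumes A: "bounded_clinear A"
  shows "cinner (adj A y) x = cinner y (A x)"
  using arg_cong[OF adj_char[OF A, of x y], of cnj] by (simp add: cinner_conj)

lemma adj_bound:
  fixes F G :: "'a::complex_inner \<Rightarrow> 'a"
  assumes FG: "\<And>u w. cinner (F u) w = cinner u (G w)"
    and Gb: "\<And>w. norm (G w) \<le> a * norm w" and a: "0 \<le> a"
  shows "norm (F u) \<le> a * norm u"
proof -
  have "(norm (F u))\<^sup>2 = Re (cinner u (G (F u)))" by (simp add: norm_sq_cinner FG)
  also have "\<dots> \<le> norm u * norm (G (F u))" by (rule Re_cinner_le)
  also have "\<dots> \<le> norm u * (a * norm (F u))" by (intro mult_left_mono Gb norm_ge_zero)
  finally have h: "norm (F u) * norm (F u) \<le> norm (F u) * (a * norm u)"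
    by (simp add: power2_eq_square algebra_simps)
  show ?thesis
  proof (cases "norm (F u) = 0")
    case True then show ?thesis using a by simp
  next
    case False then have "norm (F u) > 0" by (simp add: less_le)
    with h show ?thesis by (simp add: mult_le_cancel_left)
  qed
qed

lemma adj_bclin:
  fixes A :: "'a::chilbert_space \<Rightarrow> 'a"
  assumes A: "bounded_clinear A"
  shows "bounded_clinear (adj A)"
proof -
  obtain K where K: "\<And>x. norm (A x) \<le> norm x * K" using A unfolding bounded_clinear_def by blast
  have K': "norm (A x) \<le> \<bar>K\<bar> * norm x" for x using K[of x]
    by (metis abs_ge_self mult.commute mult_left_mono norm_ge_zero order_trans)
  have bnd: "norm (adj A y) \<le> \<bar>K\<bar> * norm y" for y
    by (rule adj_bound[where G=A]) (simp_all add: adj_char2[OF A] K')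
  have "clinear (adj A)" unfolding clinear_def
  proof (intro conjI allI)
    fix x y show "adj A (x + y) = adj A x + adj A y"
      by (rule cinner_ext) (simp add: adj_char[OF A, symmetric] cinner_add_right)
  next
    fix c x show "adj A (c *\<^sub>C x) = c *\<^sub>C adj A x"
      by (rule cinner_ext) (simp add: adj_char[OF A, symmetric] cinner_scaleC_right)
  qed
  moreover have "\<forall>x. norm (adj A x) \<le> norm x * \<bar>K\<bar>" using bnd by (simp add: mult.commute)
  ultimately show ?thesis unfolding bounded_clinear_def by blast
qed



lemma P_bound:
  fixes P S D :: "'a::complex_inner \<Rightarrow> 'a"
  assumes PSD: "\<And>x y. 2 * cinner (P x) y = cinner (S x) (S y) + cinner (D x) (D y)"
    and Sb: "\<And>u. norm (S u) \<le> a * norm u" and Db: "\<And>u. norm (D u) \<le> b * norm u"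
    and a: "0 \<le> a" and b: "0 \<le> b"
  shows "norm (P x) \<le> (a\<^sup>2 + b\<^sup>2) / 2 * norm x"
proof -
  let ?y = "P x"
  have "2 * (norm ?y)\<^sup>2 = Re (2 * cinner (P x) ?y)" by (simp add: norm_sq_cinner)
  also have "\<dots> = Re (cinner (S x) (S ?y)) + Re (cinner (D x) (D ?y))" by (simp add: PSD)
  also have "\<dots> \<le> norm (S x) * norm (S ?y) + norm (D x) * norm (D ?y)"
    by (intro add_mono Re_cinner_le)
  also have "\<dots> \<le> (a * norm x) * (a * norm ?y) + (b * norm x) * (b * norm ?y)"
    by (intro add_mono mult_mono Sb Db) (simp_all add: a b)
  finally have h: "norm ?y * (2 * norm ?y) \<le> norm ?y * ((a\<^sup>2 + b\<^sup>2) * norm x)"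
    by (simp add: power2_eq_square algebra_simps)
  show ?thesis
  proof (cases "norm ?y = 0")
    case True then show ?thesis using a b by simp
  next
    case False then have "norm ?y > 0" by (simp add: less_le)
    with h show ?thesis by (simp add: mult_le_cancel_left)
  qed
qed

lemma cinner_pm: "cinner (u + v) (u' + v') + cinner (u - v) (u' - v') = 2 * (cinner u u' + cinner v (v'::'a::complex_inner))"
  by (simp add: cinner_add_left cinner_add_right cinner_diff_left cinner_diff_right algebra_simps)



lemma lower_gen:
  fixes S :: "'a::complex_inner \<Rightarrow> 'a"
  assumes S: "bounded_linear S"
    and H: "\<And>p q. norm (p, q) = 1 \<Longrightarrow> Re (cinner (S q) p) \<le> N"
  shows "norm (S v) \<le> 2 * N * norm v"
proof (cases "v = 0")
  case True
  then show ?thesis using linear_simps(3)[OF S] by simp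
next
  case False
  then have nv: "norm v > 0" by simp
  have "Re (cinner (S (scaleR (1 / norm v) v)) 0) \<le> N" by (rule H) (use nv in simp)
  then have N0: "0 \<le> N" by simp
  show ?thesis
  proof (cases "S v = 0")
    case True then show ?thesis using N0 by simp
  next
    case False
    then have nS: "norm (S v) > 0" by simp
    define c :: real where "c = sqrt 2"
    have c0: "c > 0" and cc: "c * c = 2" unfolding c_def by simp_all
    define r1 where "r1 = 1 / (c * norm v)"
    define r2 where "r2 = 1 / (c * norm (S v))"
    define q where "q = scaleR r1 v"
    define p where "p = scaleR r2 (S v)"
    have "(norm q)\<^sup>2 = r1 * r1 * (norm v * norm v)"
      unfolding q_def by (simp add: power2_eq_square abs_mult_self_eq)
    also have "\<dots> = 1 / (c * c)" unfolding r1_def using nv c0 by (simp add: field_simps)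
    finally have nq: "(norm q)\<^sup>2 = 1/2" using cc by simp
    have "(norm p)\<^sup>2 = r2 * r2 * (norm (S v) * norm (S v))"
      unfolding p_def by (simp add: power2_eq_square abs_mult_self_eq)
    also have "\<dots> = 1 / (c * c)" unfolding r2_def using nS c0 by (simp add: field_simps)
    finally have np: "(norm p)\<^sup>2 = 1/2" using cc by simp
    have "norm (p, q) = 1" unfolding norm_Pair np nq by simp
    then have "Re (cinner (S q) p) \<le> N" by (rule H)
    moreover have "Re (cinner (S q) p) = norm (S v) / (2 * norm v)"
    proof -
      have "cinner (S q) p = of_real r2 * (of_real r1 * cinner (S v) (S v))"
        unfolding q_def p_def linear_simps(5)[OF S] cinner_scaleR_left cinner_scaleR_right ..
      then have "Re (cinner (S q) p) = r1 * r2 * (norm (S v) * norm (S v))"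
        by (simp add: cinner_self power2_eq_square)
      also have "\<dots> = norm (S v) / ((c * c) * norm v)"
        unfolding r1_def r2_def using nS nv c0 by (simp add: field_simps)
      finally show ?thesis using cc by simp
    qed
    ultimately have "norm (S v) / (2 * norm v) \<le> N" by simp
    then show ?thesis using nv by (simp add: divide_le_eq mult.commute mult.left_commute)
  qed
qed

lemma final_arith:
  fixes a b n p q :: real
  assumes "0 \<le> a" "0 \<le> b" "a\<^sup>2 \<le> 4 * n" "b\<^sup>2 \<le> 4 * n" "p \<le> (a\<^sup>2 + b\<^sup>2) / 2" "q \<le> (a\<^sup>2 + b\<^sup>2) / 2"
  shows "n \<ge> 1/8 * (max (a\<^sup>2) (b\<^sup>2) + a * b) \<and> 1/8 * (max (a\<^sup>2) (b\<^sup>2) + a * b) \<ge> 1/4 * max p q"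
proof (cases "a \<le> b")
  case True
  have "a * a \<le> a * b" using True assms by (simp add: mult_left_mono)
  moreover have "a * b \<le> b * b" using True assms by (simp add: mult_right_mono)
  ultimately show ?thesis using assms by (auto simp: power2_eq_square max_def)
next
  case False
  have "b * b \<le> a * b" using False assms by (simp add: mult_right_mono)
  moreover have "a * b \<le> a * a" using False assms by (simp add: mult_left_mono)
  ultimately show ?thesis using assms by (auto simp: power2_eq_square max_def)
qed


theorem mainTheorem6:
  fixes B C :: "'a::chilbert_space \<Rightarrow> 'a"
  assumes "bounded_clinear B" and "bounded_clinear C"
  shows "(numrad (block_op (\<lambda>_. 0) B C (\<lambda>_. 0)))\<^sup>2 \<ge>
           1/8 * (max ((onorm (\<lambda>x. B x + adj C x))\<^sup>2) ((onorm (\<lambda>x. B x - adj C x))\<^sup>2)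
                  + onorm (\<lambda>x. B x + adj C x) * onorm (\<lambda>x. B x - adj C x))
       \<and> 1/8 * (max ((onorm (\<lambda>x. B x + adj C x))\<^sup>2) ((onorm (\<lambda>x. B x - adj C x))\<^sup>2)
                  + onorm (\<lambda>x. B x + adj C x) * onorm (\<lambda>x. B x - adj C x))
         \<ge> 1/4 * max (onorm (\<lambda>x. adj B (B x) + C (adj C x)))
                      (onorm (\<lambda>x. B (adj B x) + adj C (C x)))"
  
proof -
  have bB: "bounded_clinear B" and bC: "bounded_clinear C" by fact+
  have bBa: "bounded_clinear (adj B)" and bCa: "bounded_clinear (adj C)" using adj_bclin bB bC by blast+
  let ?T = "block_op (\<lambda>_. 0) B C (\<lambda>_. 0)"
  let ?N = "numrad ?T"
  let ?S = "\<lambda>x. B x + adj C x"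
  let ?D = "\<lambda>x. B x - adj C x"
  have lS: "bounded_linear ?S" by (intro bounded_linear_add bclin_bl bB bCa)
  have lD: "bounded_linear ?D" by (intro bounded_linear_sub bclin_bl bB bCa)
  have Tpq: "?T (p, q) = (B q, C p)" for p q by (simp add: block_op_def)
  obtain KB where KB: "KB > 0" "\<And>x. norm (B x) \<le> norm x * KB"
    using bounded_linear.pos_bounded[OF bclin_bl[OF bB]] by blast
  obtain KC where KC: "KC > 0" "\<And>x. norm (C x) \<le> norm x * KC"
    using bounded_linear.pos_bounded[OF bclin_bl[OF bC]] by blast
  have bdd: "bdd_above ((\<lambda>z. cmod (cinner (?T z) z)) ` {z. norm z = 1})"
  proof (rule bdd_aboveI2)
    fix z :: "'a \<times> 'a" assume z: "z \<in> {z. norm z = 1}"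
    obtain p q where zpq: "z = (p, q)" by fastforce
    have np: "norm p \<le> 1" and nq: "norm q \<le> 1" using z zpq norm_fst_le[of p q] norm_snd_le[of q p] by auto
    have "cmod (cinner (?T z) z) \<le> norm (?T z) * norm z" by (rule cinner_cs)
    also have "\<dots> = norm (B q, C p)" using z zpq Tpq by simp
    also have "\<dots> \<le> norm (B q) + norm (C p)" by (rule norm_Pair_le)
    also have "\<dots> \<le> 1 * KB + 1 * KC"
      by (intro add_mono order_trans[OF KB(2)] order_trans[OF KC(2)] mult_right_mono) (use np nq KB KC in auto)
    finally show "cmod (cinner (?T z) z) \<le> KB + KC" by simp
  qed
  have Nge: "cmod (cinner (?T (p, q)) (p, q)) \<le> ?N" if "norm (p, q) = 1" for p q
    unfolding numrad_def by (rule cSUP_upper[OF _ bdd]) (use that in simp)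
  have expand: "cinner (?T (p, q)) (p, q) = cinner (B q) p + cinner p (adj C q)" for p q
    by (simp add: Tpq cinner_prod_def adj_char[OF bC])
  have HS: "Re (cinner (?S q) p) \<le> ?N" if "norm (p, q) = 1" for p q
  proof -
    have "Re (cinner (?S q) p) = Re (cinner (?T (p, q)) (p, q))"
      by (simp add: expand cinner_add_left Re_cinner_commute[of p])
    also have "\<dots> \<le> cmod (cinner (?T (p, q)) (p, q))" by (rule complex_Re_le_cmod)
    also have "\<dots> \<le> ?N" by (rule Nge[OF that])
    finally show ?thesis .
  qed
  have HD: "Re (cinner (?D q) p) \<le> ?N" if "norm (p, q) = 1" for p q
  proof -
    let ?p = "\<i> *\<^sub>C p"
    have np: "norm (?p, q) = 1" using that by (simp add: norm_Pair norm_scaleC)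
    have "Re (cinner (?D q) p) = Im (cinner (?D q) ?p)" by (simp add: cinner_scaleC_right)
    also have "\<dots> = Im (cinner (?T (?p, q)) (?p, q))"
      using cinner_commute[of ?p "adj C q"] by (simp add: expand cinner_diff_left)
    also have "\<dots> \<le> cmod (cinner (?T (?p, q)) (?p, q))" using abs_Im_le_cmod abs_le_D1 by blast
    also have "\<dots> \<le> ?N" by (rule Nge[OF np])
    finally show ?thesis .
  qed
  have aN: "onorm ?S \<le> 2 * \<bar>?N\<bar>"
  proof (rule onorm_bound)
    fix v :: 'a
    have "?N * norm v \<le> \<bar>?N\<bar> * norm v" by (intro mult_right_mono) auto
    then show "norm (?S v) \<le> 2 * \<bar>?N\<bar> * norm v"
      using lower_gen[OF lS HS, of v] by linarith
  qed simp
  have bN: "onorm ?D \<le> 2 * \<bar>?N\<bar>"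
  proof (rule onorm_bound)
    fix v :: 'a
    have "?N * norm v \<le> \<bar>?N\<bar> * norm v" by (intro mult_right_mono) auto
    then show "norm (?D v) \<le> 2 * \<bar>?N\<bar> * norm v"
      using lower_gen[OF lD HD, of v] by linarith
  qed simp
  define a where "a = onorm ?S"
  define b where "b = onorm ?D"
  have a0: "0 \<le> a" and b0: "0 \<le> b" unfolding a_def b_def using onorm_pos_le lS lD by blast+
  have a2: "a\<^sup>2 \<le> 4 * ?N\<^sup>2"
  proof -
    have "a\<^sup>2 \<le> (2 * \<bar>?N\<bar>)\<^sup>2" using aN a0 unfolding a_def by (intro power_mono) auto
    then show ?thesis by (simp add: power_mult_distrib)
  qed
  have b2: "b\<^sup>2 \<le> 4 * ?N\<^sup>2"
  proof -
    have "b\<^sup>2 \<le> (2 * \<bar>?N\<bar>)\<^sup>2" using bN b0 unfolding b_def by (intro power_mono) auto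
    then show ?thesis by (simp add: power_mult_distrib)
  qed
  have Sb: "norm (?S u) \<le> a * norm u" for u unfolding a_def by (rule onorm[OF lS])
  have Db: "norm (?D u) \<le> b * norm u" for u unfolding b_def by (rule onorm[OF lD])
  have P: "onorm (\<lambda>x. adj B (B x) + C (adj C x)) \<le> (a\<^sup>2 + b\<^sup>2) / 2"
  proof (rule onorm_bound)
    fix x
    show "norm (adj B (B x) + C (adj C x)) \<le> (a\<^sup>2 + b\<^sup>2) / 2 * norm x"
    proof (rule P_bound[OF _ Sb Db a0 b0])
      fix x y
      have h: "cinner (adj B (B x) + C (adj C x)) y = cinner (B x) (B y) + cinner (adj C x) (adj C y)"
        by (simp add: cinner_add_left adj_char2[OF bB] adj_char[OF bC])
      show "2 * cinner (adj B (B x) + C (adj C x)) y = cinner (?S x) (?S y) + cinner (?D x) (?D y)"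
        by (simp only: cinner_pm h)
    qed
  qed simp
  have S'b: "norm (adj B u + C u) \<le> a * norm u" for u
  proof (rule adj_bound[where G="?S", OF _ Sb a0])
    fix u w show "cinner (adj B u + C u) w = cinner u (?S w)"
      by (simp add: cinner_add_left cinner_add_right adj_char2[OF bB] adj_char[OF bC])
  qed
  have D'b: "norm (adj B u - C u) \<le> b * norm u" for u
  proof (rule adj_bound[where G="?D", OF _ Db b0])
    fix u w show "cinner (adj B u - C u) w = cinner u (?D w)"
      by (simp add: cinner_diff_left cinner_diff_right adj_char2[OF bB] adj_char[OF bC])
  qed
  have Q: "onorm (\<lambda>x. B (adj B x) + adj C (C x)) \<le> (a\<^sup>2 + b\<^sup>2) / 2"
  proof (rule onorm_bound)
    fix x
    show "norm (B (adj B x) + adj C (C x)) \<le> (a\<^sup>2 + b\<^sup>2) / 2 * norm x"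
    proof (rule P_bound[OF _ S'b D'b a0 b0])
      fix x y
      have h: "cinner (B (adj B x) + adj C (C x)) y = cinner (adj B x) (adj B y) + cinner (C x) (C y)"
        by (simp add: cinner_add_left adj_char[OF bB] adj_char2[OF bC])
      show "2 * cinner (B (adj B x) + adj C (C x)) y
            = cinner (adj B x + C x) (adj B y + C y) + cinner (adj B x - C x) (adj B y - C y)"
        by (simp only: cinner_pm h)
    qed
  qed simp
  show ?thesis
    using final_arith[OF a0 b0 a2 b2 P Q] unfolding a_def b_def by simp
qed

end
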